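(* Let $s\in(\tfrac12,1)$. For every sufficiently smooth function $f$ on $\mathbb R^3$ (with the right-hand side finite), $$\Big\|\,\|f(x_1,x_2,\cdot)\|_{L^\infty(\mathbb R)}\Big\|_{L^{2/s}(\mathbb R^2_{x_1,x_2})}\le C\big(\|f\|_{L^2}\|\partial_2f\|_{L^2}+\|\partial_1f\|_{L^2}\|\partial_{12}f\|_{L^2}\big)^{\frac{1-s}{2}}\|f\|_{L^2}^{\frac{2s-1}{2}}\|\partial_3f\|_{L^2}^{\frac12},$$ where all unmarked norms are over $\mathbb R^3$ and $C$ depends only on $s$.
   Context: $\partial_{12}=\partial_1\partial_2$. The inner norm is taken in the vertical variable $x_3$ for fixed $(x_1,x_2)$, the outer norm in the horizontal variables. *)

theory Defs
  imports "HOL-Analysis.Analysis"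
begin

definition epowr :: "ennreal \<Rightarrow> real \<Rightarrow> ennreal" where
  "epowr a p = (if a = top then top else ennreal (enn2real a powr p))"

text \<open>L2 norm over R^3 (used only for square-integrable functions).\<close>
definition L2norm3 :: "(real \<times> real \<times> real \<Rightarrow> real) \<Rightarrow> real" where
  "L2norm3 g = sqrt (\<integral>x. (g x)\<^sup>2 \<partial>lborel)"

text \<open>Mixed norm: L^p in (x1,x2) of the L^infinity norm in x3
  (for continuous f the essential supremum in x3 is the supremum).\<close>
definition mixed_norm :: "real \<Rightarrow> (real \<times> real \<times> real \<Rightarrow> real) \<Rightarrow> ennreal" where
  "mixed_norm p f =
     epowr (\<integral>\<^sup>+ y. epowr (SUP z. ennreal \<bar>f (fst y, snd y, z)\<bar>) p \<partial>(lborel :: (real \<times> real) measure))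
           (1 / p)"

end

theory Submission
  imports Defs
begin


lemma exists_small_left:
  fixes u :: "real \<Rightarrow> real"
  assumes fin: "(\<integral>\<^sup>+t. ennreal ((u t)\<^sup>2) \<partial>lborel) < \<infinity>" and e: "e > 0"
  shows "\<exists>y\<le>x. (u y)\<^sup>2 < e"
proof (rule ccontr)
  assume "\<not> ?thesis"
  hence ge: "\<And>y. y \<le> x \<Longrightarrow> e \<le> (u y)\<^sup>2" by force
  obtain c where c: "(\<integral>\<^sup>+t. ennreal ((u t)\<^sup>2) \<partial>lborel) = ennreal c" "c \<ge> 0"
    using fin by (cases "(\<integral>\<^sup>+t. ennreal ((u t)\<^sup>2) \<partial>lborel)") auto
  obtain n :: nat where n: "real n > c / e" using reals_Archimedean2 by blast
  have "ennreal (e * real n) = (\<integral>\<^sup>+t. ennreal e * indicator {x - real n..x} t \<partial>lborel)"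
    using e by (simp add: nn_integral_cmult emeasure_lborel_Icc_eq ennreal_mult)
  also have "\<dots> \<le> (\<integral>\<^sup>+t. ennreal ((u t)\<^sup>2) \<partial>lborel)"
    by (intro nn_integral_mono) (auto simp: indicator_def intro!: ennreal_leI ge)
  finally have "e * real n \<le> c" using c by (simp add: ennreal_le_iff)
  moreover have "c < e * real n" using n e by (simp add: field_simps)
  ultimately show False by simp
qed

lemma exists_small_right:
  fixes u :: "real \<Rightarrow> real"
  assumes fin: "(\<integral>\<^sup>+t. ennreal ((u t)\<^sup>2) \<partial>lborel) < \<infinity>" and e: "e > 0"
  shows "\<exists>y\<ge>x. (u y)\<^sup>2 < e"
proof (rule ccontr)
  assume "\<not> ?thesis"
  hence ge: "\<And>y. x \<le> y \<Longrightarrow> e \<le> (u y)\<^sup>2" by force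
  obtain c where c: "(\<integral>\<^sup>+t. ennreal ((u t)\<^sup>2) \<partial>lborel) = ennreal c" "c \<ge> 0"
    using fin by (cases "(\<integral>\<^sup>+t. ennreal ((u t)\<^sup>2) \<partial>lborel)") auto
  obtain n :: nat where n: "real n > c / e" using reals_Archimedean2 by blast
  have "ennreal (e * real n) = (\<integral>\<^sup>+t. ennreal e * indicator {x..x + real n} t \<partial>lborel)"
    using e by (simp add: nn_integral_cmult emeasure_lborel_Icc_eq ennreal_mult)
  also have "\<dots> \<le> (\<integral>\<^sup>+t. ennreal ((u t)\<^sup>2) \<partial>lborel)"
    by (intro nn_integral_mono) (auto simp: indicator_def intro!: ennreal_leI ge)
  finally have "e * real n \<le> c" using c by (simp add: ennreal_le_iff)
  moreover have "c < e * real n" using n e by (simp add: field_simps)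
  ultimately show False by simp
qed

lemma one_d:
  fixes u u' :: "real \<Rightarrow> real"
  assumes d: "\<And>x. (u has_real_derivative u' x) (at x)" and c: "continuous_on UNIV u'"
    and fin: "(\<integral>\<^sup>+t. ennreal ((u t)\<^sup>2) \<partial>lborel) < \<infinity>"
  shows "ennreal ((u x)\<^sup>2) \<le> (\<integral>\<^sup>+t. ennreal \<bar>u t * u' t\<bar> \<partial>lborel)"
proof (cases "(\<integral>\<^sup>+t. ennreal \<bar>u t * u' t\<bar> \<partial>lborel) = \<infinity>")
  case True then show ?thesis by simp
next
  case False
  then obtain r where r: "(\<integral>\<^sup>+t. ennreal \<bar>u t * u' t\<bar> \<partial>lborel) = ennreal r" "r \<ge> 0"
    by (cases "(\<integral>\<^sup>+t. ennreal \<bar>u t * u' t\<bar> \<partial>lborel)") auto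
  have cu: "continuous_on UNIV u"
    using d by (meson DERIV_isCont continuous_at_imp_continuous_on)
  define g where "g = (\<lambda>t. \<bar>u t * u' t\<bar>)"
  have cg: "continuous_on UNIV g" unfolding g_def
    by (intro continuous_intros cu c)
  have der: "((\<lambda>t. (u t)\<^sup>2) has_vector_derivative 2 * u t * u' t) (at t within S)" for t S
  proof -
    have "((\<lambda>t. u t * u t) has_real_derivative u' t * u t + u' t * u t) (at t)"
      by (rule DERIV_mult[OF d d])
    hence "((\<lambda>t. (u t)\<^sup>2) has_real_derivative 2 * u t * u' t) (at t)"
      by (simp add: power2_eq_square algebra_simps)
    thus ?thesis
      using has_field_derivative_at_within has_real_derivative_iff_has_vector_derivative by blast
  qed
  have ftc: "((\<lambda>t. 2 * u t * u' t) has_integral ((u b)\<^sup>2 - (u a)\<^sup>2)) {a..b}" if "a \<le> b" for a b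
    by (rule fundamental_theorem_of_calculus[OF that]) (rule der)
  have gint: "g integrable_on {a..b}" for a b
    by (rule integrable_continuous_interval) (metis cg continuous_on_subset top_greatest)
  have gle: "integral {a..b} g \<le> r" for a b
  proof -
    have "ennreal (integral {a..b} g) = (\<integral>\<^sup>+t. indicator {a..b} t * g t \<partial>lborel)"
      using integrable_integral[OF gint[of a b]] by (intro nn_integral_has_integral_lebesgue[symmetric]) (auto simp: g_def)
    also have "\<dots> \<le> (\<integral>\<^sup>+t. ennreal (g t) \<partial>lborel)"
      by (intro nn_integral_mono) (auto simp: indicator_def g_def)
    also have "\<dots> = ennreal r" using r by (simp add: g_def)
    finally show ?thesis using r(2) by (simp add: ennreal_le_iff)
  qed
  have G: "((\<lambda>t. 2 * g t) has_integral 2 * integral {a..b} g) {a..b}" for a b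
    using has_integral_mult_right[OF integrable_integral[OF gint]] .
  have "(u x)\<^sup>2 \<le> r + e" if e: "e > 0" for e
  proof -
    obtain y1 where y1: "y1 \<le> x" "(u y1)\<^sup>2 < e" using exists_small_left[OF fin e] by blast
    obtain y2 where y2: "x \<le> y2" "(u y2)\<^sup>2 < e" using exists_small_right[OF fin e] by blast
    have i1: "(u x)\<^sup>2 - (u y1)\<^sup>2 \<le> 2 * integral {y1..x} g"
      by (rule has_integral_le[OF ftc[OF y1(1)] G]) (auto simp: g_def abs_mult[symmetric])
    have i2: "(u x)\<^sup>2 - (u y2)\<^sup>2 \<le> 2 * integral {x..y2} g"
    proof -
      have "((\<lambda>t. - (2 * u t * u' t)) has_integral - ((u y2)\<^sup>2 - (u x)\<^sup>2)) {x..y2}"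
        by (intro has_integral_neg ftc y2(1))
      hence "- ((u y2)\<^sup>2 - (u x)\<^sup>2) \<le> 2 * integral {x..y2} g"
        by (rule has_integral_le[OF _ G]) (auto simp: g_def abs_mult[symmetric])
      thus ?thesis by simp
    qed
    have "integral {y1..x} g + integral {x..y2} g = integral {y1..y2} g"
      by (rule Henstock_Kurzweil_Integration.integral_combine[OF y1(1) y2(1) gint])
    with i1 i2 y1 y2 gle[of y1 y2] show ?thesis by linarith
  qed
  hence "(u x)\<^sup>2 \<le> r" by (meson field_le_epsilon)
  thus ?thesis using r by (simp add: ennreal_le_iff)
qed



lemma holder_nn:
  fixes F G :: "'a \<Rightarrow> real"
  assumes th: "0 < \<theta>" "\<theta> < 1"
    and mF[measurable]: "F \<in> borel_measurable M" and mG[measurable]: "G \<in> borel_measurable M"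
    and F0: "\<And>x. 0 \<le> F x" and G0: "\<And>x. 0 \<le> G x"
    and a: "(\<integral>\<^sup>+x. ennreal (F x) \<partial>M) \<le> ennreal a" and b: "(\<integral>\<^sup>+x. ennreal (G x) \<partial>M) \<le> ennreal b"
    and a0: "0 \<le> a" and b0: "0 \<le> b"
  shows "(\<integral>\<^sup>+x. ennreal (F x powr \<theta> * G x powr (1 - \<theta>)) \<partial>M) \<le> ennreal (a powr \<theta> * b powr (1 - \<theta>))"
proof (cases "a = 0 \<or> b = 0")
  case True
  have "AE x in M. F x powr \<theta> * G x powr (1 - \<theta>) = 0"
  proof (cases "a = 0")
    case True
    hence "(\<integral>\<^sup>+x. ennreal (F x) \<partial>M) = 0" using a by simp
    hence "AE x in M. ennreal (F x) = 0" by (simp add: nn_integral_0_iff_AE)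
    thus ?thesis by eventually_elim (use F0 in auto)
  next
    case False
    hence "b = 0" using True by simp
    hence "(\<integral>\<^sup>+x. ennreal (G x) \<partial>M) = 0" using b by simp
    hence "AE x in M. ennreal (G x) = 0" by (simp add: nn_integral_0_iff_AE)
    thus ?thesis by eventually_elim (use G0 in auto)
  qed
  hence "(\<integral>\<^sup>+x. ennreal (F x powr \<theta> * G x powr (1 - \<theta>)) \<partial>M) = 0"
    by (subst nn_integral_cong_AE[where v="\<lambda>_. 0"]) auto
  thus ?thesis by simp
next
  case False
  hence ap: "a > 0" and bp: "b > 0" using a0 b0 by auto
  define c where "c = a powr \<theta> * b powr (1 - \<theta>)"
  have c0: "c \<ge> 0" by (simp add: c_def)
  have pt: "F x powr \<theta> * G x powr (1 - \<theta>) \<le> c * \<theta> / a * F x + c * (1 - \<theta>) / b * G x" for x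
  proof (cases "F x = 0 \<or> G x = 0")
    case True
    thus ?thesis using th F0[of x] G0[of x] c0 ap bp by auto
  next
    case False
    hence Fp: "F x > 0" and Gp: "G x > 0" using F0[of x] G0[of x] by auto
    have "(F x / a) powr \<theta> * (G x / b) powr (1 - \<theta>) \<le> \<theta> * (F x / a) + (1 - \<theta>) * (G x / b)"
      by (rule Youngs_inequality_0) (use th Fp Gp ap bp in auto)
    hence "(F x powr \<theta> * G x powr (1 - \<theta>)) / c \<le> \<theta> * (F x / a) + (1 - \<theta>) * (G x / b)"
      using Fp Gp ap bp by (simp add: powr_divide c_def field_simps)
    moreover have "c > 0" using ap bp by (simp add: c_def)
    ultimately show ?thesis by (simp add: field_simps)
  qed
  have "(\<integral>\<^sup>+x. ennreal (F x powr \<theta> * G x powr (1 - \<theta>)) \<partial>M)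
      \<le> (\<integral>\<^sup>+x. ennreal (c * \<theta> / a) * ennreal (F x) + ennreal (c * (1 - \<theta>) / b) * ennreal (G x) \<partial>M)"
    using th c0 ap bp F0 G0
    by (intro nn_integral_mono) (simp add: ennreal_mult[symmetric] ennreal_plus[symmetric] del: ennreal_plus, metis pt times_divide_eq_left)
  also have "\<dots> = ennreal (c * \<theta> / a) * (\<integral>\<^sup>+x. ennreal (F x) \<partial>M) + ennreal (c * (1 - \<theta>) / b) * (\<integral>\<^sup>+x. ennreal (G x) \<partial>M)"
    by (simp add: nn_integral_add nn_integral_cmult)
  also have "\<dots> \<le> ennreal (c * \<theta> / a) * ennreal a + ennreal (c * (1 - \<theta>) / b) * ennreal b"
    by (intro add_mono mult_left_mono a b) auto
  also have "\<dots> = ennreal (c * \<theta>) + ennreal (c * (1 - \<theta>))"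
    using th c0 ap bp by (simp add: ennreal_mult[symmetric])
  also have "\<dots> = ennreal c"
  proof -
    have "ennreal (c * \<theta>) + ennreal (c * (1 - \<theta>)) = ennreal (c * \<theta> + c * (1 - \<theta>))"
      using th c0 by (intro ennreal_plus[symmetric]) auto
    thus ?thesis by (simp add: algebra_simps)
  qed
  finally show ?thesis by (simp add: c_def)
qed



lemma cont_meas: "continuous_on UNIV (g :: 'a::euclidean_space \<Rightarrow> real) \<Longrightarrow> g \<in> borel_measurable lborel"
  by (simp add: borel_measurable_continuous_onI)

lemma one_d_cs:
  fixes u u' :: "real \<Rightarrow> real"
  assumes d: "\<And>x. (u has_real_derivative u' x) (at x)" and c: "continuous_on UNIV u'"
    and A: "(\<integral>\<^sup>+t. ennreal ((u t)\<^sup>2) \<partial>lborel) \<le> ennreal A"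
    and B: "(\<integral>\<^sup>+t. ennreal ((u' t)\<^sup>2) \<partial>lborel) \<le> ennreal B"
    and A0: "0 \<le> A" and B0: "0 \<le> B"
  shows "\<bar>u x\<bar> \<le> A powr (1/4) * B powr (1/4)"
proof -
  have cu: "continuous_on UNIV u"
    using d by (meson DERIV_isCont continuous_at_imp_continuous_on)
  have m1: "(\<lambda>t. (u t)\<^sup>2) \<in> borel_measurable lborel" by (intro cont_meas continuous_intros cu)
  have m2: "(\<lambda>t. (u' t)\<^sup>2) \<in> borel_measurable lborel" by (intro cont_meas continuous_intros c)
  have "ennreal ((u x)\<^sup>2) \<le> (\<integral>\<^sup>+t. ennreal \<bar>u t * u' t\<bar> \<partial>lborel)"
    by (rule one_d[OF d c]) (use A in \<open>auto simp: top.not_eq_extremum ennreal_less_top intro: le_less_trans\<close>)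
  also have "\<dots> = (\<integral>\<^sup>+t. ennreal (((u t)\<^sup>2) powr (1/2) * ((u' t)\<^sup>2) powr (1 - 1/2)) \<partial>lborel)"
    by (intro nn_integral_cong) (simp add: powr_half_sqrt abs_mult)
  also have "\<dots> \<le> ennreal (A powr (1/2) * B powr (1 - 1/2))"
    by (rule holder_nn[OF _ _ m1 m2 _ _ A B A0 B0]) auto
  finally have "(u x)\<^sup>2 \<le> A powr (1/2) * B powr (1/2)"
    by (simp add: ennreal_le_iff)
  hence "sqrt ((u x)\<^sup>2) \<le> sqrt (A powr (1/2) * B powr (1/2))"
    by (rule real_sqrt_le_mono)
  also have "sqrt (A powr (1/2) * B powr (1/2)) = A powr (1/4) * B powr (1/4)"
    using A0 B0 by (simp add: real_sqrt_mult sqrt_def[symmetric] powr_half_sqrt[symmetric] powr_powr)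
  finally show ?thesis by simp
qed



lemma cont_meas2: "continuous_on UNIV (g :: 'a::euclidean_space \<times> 'b::euclidean_space \<Rightarrow> real) \<Longrightarrow>
   g \<in> borel_measurable (lborel \<Otimes>\<^sub>M lborel)"
  by (simp add: lborel_prod borel_measurable_continuous_onI)

lemma fub_t:
  fixes g :: "real \<times> real \<times> real \<Rightarrow> real"
  assumes cg: "continuous_on UNIV g"
  shows "(\<integral>\<^sup>+ w. (\<integral>\<^sup>+ t. ennreal (g (t, w)) \<partial>lborel) \<partial>(lborel :: (real \<times> real) measure))
        = (\<integral>\<^sup>+ x. ennreal (g x) \<partial>lborel)"
proof -
  have m: "(\<lambda>x. ennreal (g x)) \<in> borel_measurable (lborel \<Otimes>\<^sub>M (lborel :: (real \<times> real) measure))"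
    using cont_meas2[OF cg] by measurable
  show ?thesis
    using lborel_pair.nn_integral_snd[OF m] by (simp add: lborel_prod)
qed

lemma fub_y:
  fixes g :: "real \<times> real \<times> real \<Rightarrow> real"
  assumes cg: "continuous_on UNIV g"
  shows "(\<integral>\<^sup>+ x1. (\<integral>\<^sup>+ z. (\<integral>\<^sup>+ y. ennreal (g (x1, y, z)) \<partial>lborel) \<partial>lborel) \<partial>lborel)
        = (\<integral>\<^sup>+ x. ennreal (g x) \<partial>lborel)"
proof -
  have m: "(\<lambda>x. ennreal (g x)) \<in> borel_measurable ((lborel :: real measure) \<Otimes>\<^sub>M (lborel :: (real \<times> real) measure))"
    using cont_meas2[OF cg] by measurable
  have in1: "(\<integral>\<^sup>+ z. (\<integral>\<^sup>+ y. ennreal (g (x1, y, z)) \<partial>lborel) \<partial>lborel) = (\<integral>\<^sup>+ w. ennreal (g (x1, w)) \<partial>lborel)" for x1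
  proof -
    have c1: "continuous_on UNIV (\<lambda>w. g (x1, w))"
      by (intro continuous_on_compose2[OF cg] continuous_intros) auto
    have m1: "(\<lambda>w. ennreal (g (x1, w))) \<in> borel_measurable ((lborel :: real measure) \<Otimes>\<^sub>M (lborel :: real measure))"
      using cont_meas2[OF c1] by measurable
    show ?thesis
      using lborel_pair.nn_integral_snd[OF m1] by (simp add: lborel_prod)
  qed
  show ?thesis
    unfolding in1 using lborel.nn_integral_fst[OF m] by (simp add: lborel_prod)
qed

lemma fub_z:
  fixes g :: "real \<times> real \<times> real \<Rightarrow> real"
  assumes cg: "continuous_on UNIV g"
  shows "(\<integral>\<^sup>+ x. (\<integral>\<^sup>+ z. ennreal (g (fst x, snd x, z)) \<partial>lborel) \<partial>(lborel :: (real \<times> real) measure))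
        = (\<integral>\<^sup>+ x. ennreal (g x) \<partial>lborel)"
proof -
  have m: "(\<lambda>x. ennreal (g x)) \<in> borel_measurable ((lborel :: real measure) \<Otimes>\<^sub>M (lborel :: (real \<times> real) measure))"
    using cont_meas2[OF cg] by measurable
  have c2: "continuous_on UNIV (\<lambda>p. g (fst (fst p), snd (fst p), snd p) :: real)"
    by (intro continuous_on_compose2[OF cg] continuous_intros) auto
  have m2: "(\<lambda>p. ennreal (g (fst (fst p), snd (fst p), snd p))) \<in>
     borel_measurable ((lborel :: (real \<times> real) measure) \<Otimes>\<^sub>M (lborel :: real measure))"
    using cont_meas2[OF c2] by measurable
  have mz: "(\<lambda>x. \<integral>\<^sup>+ z. ennreal (g (fst x, snd x, z)) \<partial>lborel) \<in> borel_measurable ((lborel :: real measure) \<Otimes>\<^sub>M (lborel :: real measure))"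
    using lborel.borel_measurable_nn_integral_fst[OF m2] by (simp add: lborel_prod)
  have in1: "(\<integral>\<^sup>+ x2. (\<integral>\<^sup>+ z. ennreal (g (x1, x2, z)) \<partial>lborel) \<partial>lborel) = (\<integral>\<^sup>+ w. ennreal (g (x1, w)) \<partial>lborel)" for x1
  proof -
    have c1: "continuous_on UNIV (\<lambda>w. g (x1, w))"
      by (intro continuous_on_compose2[OF cg] continuous_intros) auto
    have m1: "(\<lambda>w. ennreal (g (x1, w))) \<in> borel_measurable ((lborel :: real measure) \<Otimes>\<^sub>M (lborel :: real measure))"
      using cont_meas2[OF c1] by measurable
    show ?thesis
      using lborel.nn_integral_fst[OF m1] by (simp add: lborel_prod)
  qed
  have "(\<integral>\<^sup>+ x. (\<integral>\<^sup>+ z. ennreal (g (fst x, snd x, z)) \<partial>lborel) \<partial>(lborel :: (real \<times> real) measure))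
     = (\<integral>\<^sup>+ x1. (\<integral>\<^sup>+ x2. (\<integral>\<^sup>+ z. ennreal (g (x1, x2, z)) \<partial>lborel) \<partial>lborel) \<partial>lborel)"
    using lborel.nn_integral_fst[OF mz] by (simp add: lborel_prod)
  also have "\<dots> = (\<integral>\<^sup>+ x. ennreal (g x) \<partial>lborel)"
    unfolding in1 using lborel.nn_integral_fst[OF m] by (simp add: lborel_prod)
  finally show ?thesis .
qed



lemma meas_line:
  assumes "continuous_on UNIV (h :: 'a::euclidean_space \<times> 'b::euclidean_space \<Rightarrow> real)"
  shows "(\<lambda>x. \<integral>\<^sup>+ y. ennreal (h (x, y)) \<partial>lborel) \<in> borel_measurable lborel"
proof -
  have "(\<lambda>p. ennreal (h p)) \<in> borel_measurable (lborel \<Otimes>\<^sub>M lborel)"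
    using cont_meas2[OF assms] by measurable
  from lborel.borel_measurable_nn_integral_fst[OF this] show ?thesis by simp
qed

lemma ennreal_enn2real_le': "ennreal (enn2real x) \<le> x"
  by (cases x) auto

lemma line_bound:
  fixes g g' :: "real \<times> real \<times> real \<Rightarrow> real"
  assumes d: "\<And>x1 x2 x3. ((\<lambda>t. g (t, x2, x3)) has_real_derivative g' (x1, x2, x3)) (at x1)"
    and cg': "continuous_on UNIV g'"
    and fa: "(\<integral>\<^sup>+ t. ennreal ((g (t, w))\<^sup>2) \<partial>lborel) \<noteq> \<infinity>"
    and fb: "(\<integral>\<^sup>+ t. ennreal ((g' (t, w))\<^sup>2) \<partial>lborel) \<noteq> \<infinity>"
  shows "\<bar>g (t, w)\<bar> \<le> enn2real (\<integral>\<^sup>+ t. ennreal ((g (t, w))\<^sup>2) \<partial>lborel) powr (1/4)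
                     * enn2real (\<integral>\<^sup>+ t. ennreal ((g' (t, w))\<^sup>2) \<partial>lborel) powr (1/4)"
proof -
  obtain y z where w: "w = (y, z)" by (cases w)
  have c: "continuous_on UNIV (\<lambda>t. g' (t, w))"
    by (intro continuous_on_compose2[OF cg'] continuous_intros) auto
  show ?thesis
    by (rule one_d_cs[where u="\<lambda>t. g (t, w)" and u'="\<lambda>t. g' (t, w)"]) 
       (use c fa fb in \<open>auto simp: w ennreal_enn2real_if intro: d\<close>)
qed



lemma step2:
  fixes f f1 f2 f12 :: "real \<times> real \<times> real \<Rightarrow> real"
  assumes cf: "continuous_on UNIV f" and cf1: "continuous_on UNIV f1"
    and cf2: "continuous_on UNIV f2" and cf12: "continuous_on UNIV f12"
    and d1: "\<And>x1 x2 x3. ((\<lambda>t. f (t, x2, x3)) has_real_derivative f1 (x1, x2, x3)) (at x1)"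
    and d2: "\<And>x1 x2 x3. ((\<lambda>t. f (x1, t, x3)) has_real_derivative f2 (x1, x2, x3)) (at x2)"
    and d12: "\<And>x1 x2 x3. ((\<lambda>t. f2 (t, x2, x3)) has_real_derivative f12 (x1, x2, x3)) (at x1)"
    and Nf: "(\<integral>\<^sup>+ x. ennreal ((f x)\<^sup>2) \<partial>lborel) = ennreal (nf\<^sup>2)"
    and N1: "(\<integral>\<^sup>+ x. ennreal ((f1 x)\<^sup>2) \<partial>lborel) = ennreal (n1\<^sup>2)"
    and N2: "(\<integral>\<^sup>+ x. ennreal ((f2 x)\<^sup>2) \<partial>lborel) = ennreal (n2\<^sup>2)"
    and N12: "(\<integral>\<^sup>+ x. ennreal ((f12 x)\<^sup>2) \<partial>lborel) = ennreal (n12\<^sup>2)"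
    and pos: "0 \<le> nf" "0 \<le> n1" "0 \<le> n2" "0 \<le> n12"
  shows "AE x in (lborel :: (real \<times> real) measure).
           (\<integral>\<^sup>+ z. ennreal ((f (fst x, snd x, z))\<^sup>2) \<partial>lborel) \<le> ennreal (nf * n2 + n1 * n12)"
proof -
  define L where "L g w = (\<integral>\<^sup>+ t. ennreal ((g (t, w))\<^sup>2) \<partial>lborel)"
    for g :: "real \<times> real \<times> real \<Rightarrow> real" and w :: "real \<times> real"
  have Lm: "L g \<in> borel_measurable lborel" if "continuous_on UNIV g" for g
  proof -
    have "continuous_on UNIV (\<lambda>p :: (real \<times> real) \<times> real. (g (snd p, fst p))\<^sup>2)"
      by (intro continuous_intros continuous_on_compose2[OF that]) auto
    from meas_line[OF this] show ?thesis unfolding L_def[abs_def] by simp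
  qed
  have Lint: "(\<integral>\<^sup>+ w. L g w \<partial>lborel) = (\<integral>\<^sup>+ x. ennreal ((g x)\<^sup>2) \<partial>lborel)" if "continuous_on UNIV g" for g
  proof -
    have "continuous_on UNIV (\<lambda>x. (g x)\<^sup>2)" by (intro continuous_intros that)
    from fub_t[OF this] show ?thesis unfolding L_def by simp
  qed
  have Lfin: "AE w in lborel. L g w \<noteq> \<infinity>" if "continuous_on UNIV g" "(\<integral>\<^sup>+ x. ennreal ((g x)\<^sup>2) \<partial>lborel) = ennreal c" for g c
    by (rule nn_integral_PInf_AE[OF Lm[OF that(1)]]) (simp add: Lint[OF that(1)] that(2))
  define good where "good w \<longleftrightarrow> L f w \<noteq> \<infinity> \<and> L f1 w \<noteq> \<infinity> \<and> L f2 w \<noteq> \<infinity> \<and> L f12 w \<noteq> \<infinity>" for w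
  have AEgood: "AE w in lborel. good w"
    using Lfin[OF cf Nf] Lfin[OF cf1 N1] Lfin[OF cf2 N2] Lfin[OF cf12 N12]
    unfolding good_def by eventually_elim auto
  define a where "a w = enn2real (L f w)" for w
  define b where "b w = enn2real (L f1 w)" for w
  define c where "c w = enn2real (L f2 w)" for w
  define e where "e w = enn2real (L f12 w)" for w
  define \<Phi> where "\<Phi> w = (a w powr (1/2) * c w powr (1/2)) powr (1/2) * (b w powr (1/2) * e w powr (1/2)) powr (1/2)" for w
  have bnd: "\<bar>f (t, w) * f2 (t, w)\<bar> \<le> \<Phi> w" if "good w" for t w
  proof -
    have "\<bar>f (t, w)\<bar> \<le> a w powr (1/4) * b w powr (1/4)"
      using line_bound[OF d1 cf1] that unfolding good_def L_def a_def b_def by blast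
    moreover have "\<bar>f2 (t, w)\<bar> \<le> c w powr (1/4) * e w powr (1/4)"
      using line_bound[OF d12 cf12] that unfolding good_def L_def c_def e_def by blast
    ultimately have "\<bar>f (t, w) * f2 (t, w)\<bar> \<le> (a w powr (1/4) * b w powr (1/4)) * (c w powr (1/4) * e w powr (1/4))"
      unfolding abs_mult by (intro mult_mono) auto
    also have "\<dots> = \<Phi> w"
      by (simp add: \<Phi>_def powr_mult powr_powr a_def b_def c_def e_def)
    finally show ?thesis .
  qed
  have [measurable]: "L f \<in> borel_measurable lborel" "L f1 \<in> borel_measurable lborel"
    "L f2 \<in> borel_measurable lborel" "L f12 \<in> borel_measurable lborel"
    using Lm cf cf1 cf2 cf12 by auto
  have [measurable]: "a \<in> borel_measurable lborel" "b \<in> borel_measurable lborel"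
    "c \<in> borel_measurable lborel" "e \<in> borel_measurable lborel"
    unfolding a_def[abs_def] b_def[abs_def] c_def[abs_def] e_def[abs_def] by measurable
  have ia: "(\<integral>\<^sup>+ w. ennreal (enn2real (L g w)) \<partial>lborel) \<le> ennreal (m\<^sup>2)"
    if "continuous_on UNIV g" "(\<integral>\<^sup>+ x. ennreal ((g x)\<^sup>2) \<partial>lborel) = ennreal (m\<^sup>2)" for g m
  proof -
    have "(\<integral>\<^sup>+ w. ennreal (enn2real (L g w)) \<partial>lborel) \<le> (\<integral>\<^sup>+ w. L g w \<partial>lborel)"
      by (intro nn_integral_mono ennreal_enn2real_le')
    also have "\<dots> = ennreal (m\<^sup>2)" using Lint[OF that(1)] that(2) by simp
    finally show ?thesis .
  qed
  define F where "F w = a w powr (1/2) * c w powr (1 - 1/2)" for w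
  define G where "G w = b w powr (1/2) * e w powr (1 - 1/2)" for w
  have [measurable]: "F \<in> borel_measurable lborel" "G \<in> borel_measurable lborel"
    unfolding F_def[abs_def] G_def[abs_def] by measurable
  have iF: "(\<integral>\<^sup>+ w. ennreal (F w) \<partial>lborel) \<le> ennreal (nf * n2)"
  proof -
    have "(\<integral>\<^sup>+ w. ennreal (F w) \<partial>lborel) \<le> ennreal ((nf\<^sup>2) powr (1/2) * (n2\<^sup>2) powr (1 - 1/2))"
      unfolding F_def
      by (rule holder_nn) (use ia[OF cf Nf] ia[OF cf2 N2] in \<open>auto simp: a_def c_def\<close>)
    also have "(nf\<^sup>2) powr (1/2) * (n2\<^sup>2) powr (1 - 1/2) = nf * n2"
      using pos by (simp add: powr_half_sqrt)
    finally show ?thesis .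
  qed
  have iG: "(\<integral>\<^sup>+ w. ennreal (G w) \<partial>lborel) \<le> ennreal (n1 * n12)"
  proof -
    have "(\<integral>\<^sup>+ w. ennreal (G w) \<partial>lborel) \<le> ennreal ((n1\<^sup>2) powr (1/2) * (n12\<^sup>2) powr (1 - 1/2))"
      unfolding G_def
      by (rule holder_nn) (use ia[OF cf1 N1] ia[OF cf12 N12] in \<open>auto simp: b_def e_def\<close>)
    also have "(n1\<^sup>2) powr (1/2) * (n12\<^sup>2) powr (1 - 1/2) = n1 * n12"
      using pos by (simp add: powr_half_sqrt)
    finally show ?thesis .
  qed
  have PhiFG: "\<Phi> w = F w powr (1/2) * G w powr (1 - 1/2)" for w
    by (simp add: \<Phi>_def F_def G_def)
  have [measurable]: "\<Phi> \<in> borel_measurable lborel"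
    unfolding PhiFG[abs_def] by measurable
  have iPhi: "(\<integral>\<^sup>+ w. ennreal (\<Phi> w) \<partial>lborel) \<le> ennreal (nf * n2 + n1 * n12)"
  proof -
    have "(\<integral>\<^sup>+ w. ennreal (\<Phi> w) \<partial>lborel) \<le> ennreal ((nf * n2) powr (1/2) * (n1 * n12) powr (1 - 1/2))"
      unfolding PhiFG
      by (rule holder_nn) (use iF iG pos in \<open>auto simp: F_def G_def\<close>)
    also have "(nf * n2) powr (1/2) * (n1 * n12) powr (1 - 1/2) \<le> nf * n2 + n1 * n12"
    proof -
      have "(nf * n2) powr (1/2) * (n1 * n12) powr (1 - 1/2) = sqrt ((nf * n2) * (n1 * n12))"
        using pos by (simp add: powr_half_sqrt real_sqrt_mult)
      also have "\<dots> \<le> ((nf * n2) + (n1 * n12)) / 2"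
        by (rule arith_geo_mean_sqrt) (use pos in auto)
      also have "\<dots> \<le> nf * n2 + n1 * n12" using pos by simp
      finally show ?thesis .
    qed
    hence "ennreal ((nf * n2) powr (1/2) * (n1 * n12) powr (1 - 1/2)) \<le> ennreal (nf * n2 + n1 * n12)"
      by (rule ennreal_leI)
    finally show ?thesis .
  qed
  define \<eta> where "\<eta> x1 z = (\<integral>\<^sup>+ y. ennreal ((f (x1, y, z))\<^sup>2) \<partial>lborel)" for x1 z
  have cff: "continuous_on UNIV (\<lambda>p :: (real \<times> real) \<times> real. (f (fst (fst p), snd p, snd (fst p)))\<^sup>2)"
    by (intro continuous_intros continuous_on_compose2[OF cf]) auto
  have meta: "(\<lambda>p. \<eta> (fst p) (snd p)) \<in> borel_measurable (lborel :: (real \<times> real) measure)"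
    using meas_line[OF cff] unfolding \<eta>_def by simp
  have meta2: "(\<lambda>x1. \<integral>\<^sup>+ z. \<eta> x1 z \<partial>lborel) \<in> borel_measurable lborel"
  proof -
    have "(\<lambda>p. \<eta> (fst p) (snd p)) \<in> borel_measurable ((lborel :: real measure) \<Otimes>\<^sub>M lborel)"
      using meta by (simp add: lborel_prod)
    from lborel.borel_measurable_nn_integral_fst[OF this] show ?thesis by simp
  qed
  have meta1: "(\<lambda>z. \<eta> x1 z) \<in> borel_measurable lborel" for x1
  proof -
    have "(\<lambda>z. (\<lambda>p. \<eta> (fst p) (snd p)) (x1, z)) \<in> borel_measurable lborel"
      by (rule measurable_compose[OF _ meta]) (auto intro!: borel_measurable_continuous_onI continuous_intros)
    thus ?thesis by simp
  qed
  have "(\<integral>\<^sup>+ x1. (\<integral>\<^sup>+ z. \<eta> x1 z \<partial>lborel) \<partial>lborel) = ennreal (nf\<^sup>2)"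
  proof -
    have "continuous_on UNIV (\<lambda>x. (f x)\<^sup>2)" by (intro continuous_intros cf)
    from fub_y[OF this] Nf show ?thesis unfolding \<eta>_def by simp
  qed
  hence "AE x1 in lborel. (\<integral>\<^sup>+ z. \<eta> x1 z \<partial>lborel) \<noteq> \<infinity>"
    by (intro nn_integral_PInf_AE meta2) simp
  hence AE1: "AE x1 in lborel. AE z in lborel. \<eta> x1 z \<noteq> \<infinity>"
    by eventually_elim (rule nn_integral_PInf_AE[OF meta1])
  have [measurable]: "Measurable.pred lborel good"
    unfolding good_def by measurable
  have AE2: "AE z in lborel. AE y in lborel. good (y, z)"
  proof -
    have "AE w in (lborel :: real measure) \<Otimes>\<^sub>M lborel. good w"
      by (subst lborel_prod) (rule AEgood)
    hence "AE y in lborel. AE z in lborel. good (y, z)"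
      by (rule lborel_pair.AE_pair)
    moreover have "{x \<in> space ((lborel :: real measure) \<Otimes>\<^sub>M lborel). good (fst x, snd x)} \<in> sets (lborel \<Otimes>\<^sub>M lborel)"
      unfolding lborel_prod by simp
    ultimately show ?thesis
      using lborel_pair.AE_commute[where P="\<lambda>y z. good (y, z)"] by simp
  qed
  have key: "(\<integral>\<^sup>+ z. ennreal ((f (x1, x2, z))\<^sup>2) \<partial>lborel) \<le> ennreal (nf * n2 + n1 * n12)"
    if x1: "AE z in lborel. \<eta> x1 z \<noteq> \<infinity>" for x1 x2
  proof -
    have "(\<integral>\<^sup>+ z. ennreal ((f (x1, x2, z))\<^sup>2) \<partial>lborel) \<le> (\<integral>\<^sup>+ z. (\<integral>\<^sup>+ y. ennreal (\<Phi> (y, z)) \<partial>lborel) \<partial>lborel)"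
    proof (intro nn_integral_mono_AE)
      show "AE z in lborel. ennreal ((f (x1, x2, z))\<^sup>2) \<le> (\<integral>\<^sup>+ y. ennreal (\<Phi> (y, z)) \<partial>lborel)"
        using x1 AE2
      proof eventually_elim
        case (elim z)
        have cu: "continuous_on UNIV (\<lambda>y. f2 (x1, y, z))"
          by (intro continuous_on_compose2[OF cf2] continuous_intros) auto
        have "ennreal ((f (x1, x2, z))\<^sup>2) \<le> (\<integral>\<^sup>+ y. ennreal \<bar>f (x1, y, z) * f2 (x1, y, z)\<bar> \<partial>lborel)"
          by (rule one_d[where u="\<lambda>y. f (x1, y, z)" and u'="\<lambda>y. f2 (x1, y, z)"])
             (use elim(1) cu in \<open>auto simp: \<eta>_def top.not_eq_extremum intro: d2\<close>)
        also have "\<dots> \<le> (\<integral>\<^sup>+ y. ennreal (\<Phi> (y, z)) \<partial>lborel)"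
          using elim(2) by (intro nn_integral_mono_AE) (auto elim!: eventually_mono intro!: ennreal_leI bnd)
        finally show ?case .
      qed
    qed
    also have "\<dots> = (\<integral>\<^sup>+ w. ennreal (\<Phi> w) \<partial>lborel)"
    proof -
      have "(\<lambda>w. ennreal (\<Phi> w)) \<in> borel_measurable ((lborel :: real measure) \<Otimes>\<^sub>M lborel)"
        by (simp add: lborel_prod)
      from lborel_pair.nn_integral_snd[OF this] show ?thesis by (simp add: lborel_prod)
    qed
    also have "\<dots> \<le> ennreal (nf * n2 + n1 * n12)" by (rule iPhi)
    finally show ?thesis .
  qed
  have "AE x in (lborel :: real measure) \<Otimes>\<^sub>M lborel.
           (\<integral>\<^sup>+ z. ennreal ((f (fst x, snd x, z))\<^sup>2) \<partial>lborel) \<le> ennreal (nf * n2 + n1 * n12)"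
  proof (rule lborel_pair.AE_pair_measure)
    have cz: "continuous_on UNIV (\<lambda>p :: (real \<times> real) \<times> real. (f (fst (fst p), snd (fst p), snd p))\<^sup>2)"
      by (intro continuous_intros continuous_on_compose2[OF cf]) auto
    have [measurable]: "(\<lambda>x. \<integral>\<^sup>+ z. ennreal ((f (fst x, snd x, z))\<^sup>2) \<partial>lborel) \<in> borel_measurable (lborel :: (real \<times> real) measure)"
      using meas_line[OF cz] by simp
    show "{x \<in> space ((lborel :: real measure) \<Otimes>\<^sub>M lborel). (\<integral>\<^sup>+ z. ennreal ((f (fst x, snd x, z))\<^sup>2) \<partial>lborel) \<le> ennreal (nf * n2 + n1 * n12)}
       \<in> sets (lborel \<Otimes>\<^sub>M lborel)"
      unfolding lborel_prod by simp
    show "AE x1 in lborel. AE x2 in lborel. (\<integral>\<^sup>+ z. ennreal ((f (fst (x1, x2), snd (x1, x2), z))\<^sup>2) \<partial>lborel) \<le> ennreal (nf * n2 + n1 * n12)"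
      by (rule eventually_mono[OF AE1], rule always_eventually, auto intro: key)
  qed
  thus ?thesis unfolding lborel_prod .
qed



lemma L2_nn:
  assumes "integrable lborel (\<lambda>x. (g x)\<^sup>2)"
  shows "(\<integral>\<^sup>+ x. ennreal ((g x)\<^sup>2) \<partial>lborel) = ennreal ((L2norm3 g)\<^sup>2)"
proof -
  have "0 \<le> (\<integral>x. (g x)\<^sup>2 \<partial>lborel)" by (rule integral_nonneg_AE) auto
  thus ?thesis using nn_integral_eq_integral[OF assms] by (simp add: L2norm3_def)
qed

lemma L2_pos: "0 \<le> L2norm3 g" by (simp add: L2norm3_def)

lemma epowr_le:
  assumes "x \<le> ennreal r" "0 \<le> r" "0 < p"
  shows "epowr x p \<le> ennreal (r powr p)"
proof -
  have "x \<noteq> top" using assms(1) by (auto simp: top_unique)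
  hence "enn2real x \<le> r" using assms(1,2) by (cases x) auto
  hence "enn2real x powr p \<le> r powr p" using assms(3) by (intro powr_mono2) auto
  thus ?thesis using \<open>x \<noteq> top\<close> by (simp add: epowr_def ennreal_leI)
qed

lemma main_bound:
  fixes s :: real and f f1 f2 f3 f12 :: "real \<times> real \<times> real \<Rightarrow> real"
  assumes s: "1/2 < s" "s < 1"
    and cf: "continuous_on UNIV f" and cf1: "continuous_on UNIV f1"
    and cf2: "continuous_on UNIV f2" and cf3: "continuous_on UNIV f3" and cf12: "continuous_on UNIV f12"
    and d1: "\<And>x1 x2 x3. ((\<lambda>t. f (t, x2, x3)) has_real_derivative f1 (x1, x2, x3)) (at x1)"
    and d2: "\<And>x1 x2 x3. ((\<lambda>t. f (x1, t, x3)) has_real_derivative f2 (x1, x2, x3)) (at x2)"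
    and d3: "\<And>x1 x2 x3. ((\<lambda>t. f (x1, x2, t)) has_real_derivative f3 (x1, x2, x3)) (at x3)"
    and d12: "\<And>x1 x2 x3. ((\<lambda>t. f2 (t, x2, x3)) has_real_derivative f12 (x1, x2, x3)) (at x1)"
    and i: "integrable lborel (\<lambda>x. (f x)\<^sup>2)" and i1: "integrable lborel (\<lambda>x. (f1 x)\<^sup>2)"
    and i2: "integrable lborel (\<lambda>x. (f2 x)\<^sup>2)" and i3: "integrable lborel (\<lambda>x. (f3 x)\<^sup>2)"
    and i12: "integrable lborel (\<lambda>x. (f12 x)\<^sup>2)"
  shows "mixed_norm (2 / s) f \<le>
        ennreal (1 * (L2norm3 f * L2norm3 f2 + L2norm3 f1 * L2norm3 f12) powr ((1 - s) / 2)
                   * L2norm3 f powr ((2 * s - 1) / 2) * L2norm3 f3 powr (1 / 2))"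
proof -
  define nf where "nf = L2norm3 f"
  define n1 where "n1 = L2norm3 f1"
  define n2 where "n2 = L2norm3 f2"
  define n3 where "n3 = L2norm3 f3"
  define n12 where "n12 = L2norm3 f12"
  define Q where "Q = nf * n2 + n1 * n12"
  have pos: "0 \<le> nf" "0 \<le> n1" "0 \<le> n2" "0 \<le> n3" "0 \<le> n12"
    by (simp_all add: nf_def n1_def n2_def n3_def n12_def L2_pos)
  have Q0: "0 \<le> Q" using pos by (simp add: Q_def)
  have AEQ: "AE x in (lborel :: (real \<times> real) measure).
           (\<integral>\<^sup>+ z. ennreal ((f (fst x, snd x, z))\<^sup>2) \<partial>lborel) \<le> ennreal Q"
    unfolding Q_def
    by (rule step2[OF cf cf1 cf2 cf12 d1 d2 d12])
       (simp_all add: L2_nn i i1 i2 i12 L2_pos nf_def n1_def n2_def n12_def)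
  define Z where "Z g x = (\<integral>\<^sup>+ z. ennreal ((g (fst x, snd x, z))\<^sup>2) \<partial>lborel)"
    for g :: "real \<times> real \<times> real \<Rightarrow> real" and x :: "real \<times> real"
  have Zm: "Z g \<in> borel_measurable lborel" if "continuous_on UNIV g" for g
  proof -
    have cz: "continuous_on UNIV (\<lambda>p :: (real \<times> real) \<times> real. (g (fst (fst p), snd (fst p), snd p))\<^sup>2)"
      by (intro continuous_intros continuous_on_compose2[OF that]) auto
    show ?thesis
      using meas_line[OF cz] unfolding Z_def[abs_def] by simp
  qed
  have Zint: "(\<integral>\<^sup>+ x. Z g x \<partial>lborel) = ennreal ((L2norm3 g)\<^sup>2)"
    if "continuous_on UNIV g" "integrable lborel (\<lambda>x. (g x)\<^sup>2)" for g
  proof -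
    have "continuous_on UNIV (\<lambda>x. (g x)\<^sup>2)" by (intro continuous_intros that)
    from fub_z[OF this] L2_nn[OF that(2)] show ?thesis unfolding Z_def by simp
  qed
  have Zfin: "AE x in lborel. Z g x \<noteq> \<infinity>"
    if "continuous_on UNIV g" "integrable lborel (\<lambda>x. (g x)\<^sup>2)" for g
    by (rule nn_integral_PInf_AE[OF Zm[OF that(1)]]) (simp add: Zint[OF that])
  define \<theta> where "\<theta> = (2 * s - 1) / (2 * s)"
  have th: "0 < \<theta>" "\<theta> < 1" "1 - \<theta> = 1 / (2 * s)" using s by (auto simp: \<theta>_def field_simps)
  define A2 where "A2 x = enn2real (Z f x)" for x
  define B2 where "B2 x = enn2real (Z f3 x)" for x
  have ptw: "epowr (SUP z. ennreal \<bar>f (fst x, snd x, z)\<bar>) (2 / s)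
      \<le> ennreal (Q powr ((1 - s) / s) * (A2 x powr \<theta> * B2 x powr (1 - \<theta>)))"
    if g1: "Z f x \<noteq> \<infinity>" and g2: "Z f3 x \<noteq> \<infinity>" and g3: "Z f x \<le> ennreal Q" for x
  proof -
    have A0: "0 \<le> A2 x" "0 \<le> B2 x" by (simp_all add: A2_def B2_def)
    have c3: "continuous_on UNIV (\<lambda>z. f3 (fst x, snd x, z))"
      by (intro continuous_on_compose2[OF cf3] continuous_intros) auto
    have lb: "\<bar>f (fst x, snd x, z)\<bar> \<le> A2 x powr (1/4) * B2 x powr (1/4)" for z
      by (rule one_d_cs[where u="\<lambda>z. f (fst x, snd x, z)" and u'="\<lambda>z. f3 (fst x, snd x, z)"])
         (use c3 g1 g2 in \<open>auto simp: A2_def B2_def Z_def ennreal_enn2real_if intro: d3\<close>)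
    have "(SUP z. ennreal \<bar>f (fst x, snd x, z)\<bar>) \<le> ennreal (A2 x powr (1/4) * B2 x powr (1/4))"
      by (intro SUP_least ennreal_leI lb)
    hence "epowr (SUP z. ennreal \<bar>f (fst x, snd x, z)\<bar>) (2 / s)
       \<le> ennreal ((A2 x powr (1/4) * B2 x powr (1/4)) powr (2 / s))"
      by (rule epowr_le) (use s in auto)
    also have "(A2 x powr (1/4) * B2 x powr (1/4)) powr (2 / s) = A2 x powr (1 / (2 * s)) * B2 x powr (1 - \<theta>)"
      using A0 th by (simp add: powr_mult powr_powr)
    also have "A2 x powr (1 / (2 * s)) = A2 x powr ((1 - s) / s) * A2 x powr \<theta>"
    proof -
      have "1 / (2 * s) = (1 - s) / s + \<theta>" using s by (simp add: \<theta>_def field_simps)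
      thus ?thesis by (simp add: powr_add)
    qed
    also have "A2 x powr ((1 - s) / s) \<le> Q powr ((1 - s) / s)"
    proof (rule powr_mono2)
      show "A2 x \<le> Q" using g3 g1 Q0 by (cases "Z f x") (auto simp: A2_def)
    qed (use s A0 in auto)
    hence "A2 x powr ((1 - s) / s) * A2 x powr \<theta> * B2 x powr (1 - \<theta>) \<le> Q powr ((1 - s) / s) * A2 x powr \<theta> * B2 x powr (1 - \<theta>)"
      by (intro mult_right_mono) auto
    hence "ennreal (A2 x powr ((1 - s) / s) * A2 x powr \<theta> * B2 x powr (1 - \<theta>)) \<le> ennreal (Q powr ((1 - s) / s) * (A2 x powr \<theta> * B2 x powr (1 - \<theta>)))"
      by (intro ennreal_leI) (simp add: mult.assoc)
    finally show ?thesis .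
  qed
  have [measurable]: "Z f \<in> borel_measurable lborel" "Z f3 \<in> borel_measurable lborel"
    using Zm cf cf3 by auto
  have [measurable]: "A2 \<in> borel_measurable lborel" "B2 \<in> borel_measurable lborel"
    unfolding A2_def[abs_def] B2_def[abs_def] by measurable
  have iA: "(\<integral>\<^sup>+ x. ennreal (A2 x) \<partial>lborel) \<le> ennreal (nf\<^sup>2)"
  proof -
    have "(\<integral>\<^sup>+ x. ennreal (A2 x) \<partial>lborel) \<le> (\<integral>\<^sup>+ x. Z f x \<partial>lborel)"
      unfolding A2_def by (intro nn_integral_mono ennreal_enn2real_le')
    thus ?thesis using Zint[OF cf i] by (simp add: nf_def)
  qed
  have iB: "(\<integral>\<^sup>+ x. ennreal (B2 x) \<partial>lborel) \<le> ennreal (n3\<^sup>2)"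
  proof -
    have "(\<integral>\<^sup>+ x. ennreal (B2 x) \<partial>lborel) \<le> (\<integral>\<^sup>+ x. Z f3 x \<partial>lborel)"
      unfolding B2_def by (intro nn_integral_mono ennreal_enn2real_le')
    thus ?thesis using Zint[OF cf3 i3] by (simp add: n3_def)
  qed
  define K where "K = Q powr ((1 - s) / s) * ((nf\<^sup>2) powr \<theta> * (n3\<^sup>2) powr (1 - \<theta>))"
  have K0: "0 \<le> K" by (simp add: K_def)
  have I: "(\<integral>\<^sup>+ y. epowr (SUP z. ennreal \<bar>f (fst y, snd y, z)\<bar>) (2 / s) \<partial>(lborel :: (real \<times> real) measure))
      \<le> ennreal K"
  proof -
    have "(\<integral>\<^sup>+ y. epowr (SUP z. ennreal \<bar>f (fst y, snd y, z)\<bar>) (2 / s) \<partial>(lborel :: (real \<times> real) measure))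
      \<le> (\<integral>\<^sup>+ x. ennreal (Q powr ((1 - s) / s)) * ennreal (A2 x powr \<theta> * B2 x powr (1 - \<theta>)) \<partial>lborel)"
    proof (rule nn_integral_mono_AE)
      show "AE x in lborel. epowr (SUP z. ennreal \<bar>f (fst x, snd x, z)\<bar>) (2 / s)
          \<le> ennreal (Q powr ((1 - s) / s)) * ennreal (A2 x powr \<theta> * B2 x powr (1 - \<theta>))"
        using Zfin[OF cf i] Zfin[OF cf3 i3] AEQ
        by eventually_elim (simp add: ennreal_mult[symmetric] ptw Z_def)
    qed
    also have "\<dots> = ennreal (Q powr ((1 - s) / s)) * (\<integral>\<^sup>+ x. ennreal (A2 x powr \<theta> * B2 x powr (1 - \<theta>)) \<partial>lborel)"
      by (rule nn_integral_cmult) measurable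
    also have "\<dots> \<le> ennreal (Q powr ((1 - s) / s)) * ennreal ((nf\<^sup>2) powr \<theta> * (n3\<^sup>2) powr (1 - \<theta>))"
      by (intro mult_left_mono holder_nn th iA iB) (auto simp: A2_def B2_def)
    also have "\<dots> = ennreal K" by (simp add: K_def ennreal_mult[symmetric])
    finally show ?thesis .
  qed
  have "mixed_norm (2 / s) f \<le> ennreal (K powr (1 / (2 / s)))"
    unfolding mixed_norm_def by (rule epowr_le[OF I K0]) (use s in auto)
  also have "K powr (1 / (2 / s)) = Q powr ((1 - s) / 2) * nf powr ((2 * s - 1) / 2) * n3 powr (1 / 2)"
  proof -
    have "K powr (1 / (2 / s)) = (Q powr ((1 - s) / s)) powr (s / 2) * ((nf\<^sup>2) powr \<theta>) powr (s / 2) * ((n3\<^sup>2) powr (1 - \<theta>)) powr (s / 2)"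
      by (simp add: K_def powr_mult mult.assoc)
    also have "(Q powr ((1 - s) / s)) powr (s / 2) = Q powr ((1 - s) / 2)"
      using s by (simp add: powr_powr)
    also have "((nf\<^sup>2) powr \<theta>) powr (s / 2) = nf powr ((2 * s - 1) / 2)"
      using s pos by (simp add: powr_powr \<theta>_def flip: powr_numeral) (rule arg_cong[where f="(powr) nf"], simp add: field_simps)
    also have "((n3\<^sup>2) powr (1 - \<theta>)) powr (s / 2) = n3 powr (1 / 2)"
      using s pos th(3) by (simp add: powr_powr flip: powr_numeral)
    finally show ?thesis .
  qed
  finally show ?thesis by (simp add: Q_def nf_def n1_def n2_def n3_def n12_def)
qed


theorem lemmaA1:
  fixes s :: real
  assumes "1/2 < s" and "s < 1"
  shows "\<exists>C>0. \<forall>(f :: real \<times> real \<times> real \<Rightarrow> real) f1 f2 f3 f12.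
    continuous_on UNIV f \<and> continuous_on UNIV f1 \<and> continuous_on UNIV f2 \<and>
    continuous_on UNIV f3 \<and> continuous_on UNIV f12 \<and>
    (\<forall>x1 x2 x3. ((\<lambda>t. f (t, x2, x3)) has_real_derivative f1 (x1, x2, x3)) (at x1)) \<and>
    (\<forall>x1 x2 x3. ((\<lambda>t. f (x1, t, x3)) has_real_derivative f2 (x1, x2, x3)) (at x2)) \<and>
    (\<forall>x1 x2 x3. ((\<lambda>t. f (x1, x2, t)) has_real_derivative f3 (x1, x2, x3)) (at x3)) \<and>
    (\<forall>x1 x2 x3. ((\<lambda>t. f2 (t, x2, x3)) has_real_derivative f12 (x1, x2, x3)) (at x1)) \<and>
    integrable lborel (\<lambda>x. (f x)\<^sup>2) \<and> integrable lborel (\<lambda>x. (f1 x)\<^sup>2) \<and>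
    integrable lborel (\<lambda>x. (f2 x)\<^sup>2) \<and> integrable lborel (\<lambda>x. (f3 x)\<^sup>2) \<and>
    integrable lborel (\<lambda>x. (f12 x)\<^sup>2)
    \<longrightarrow> mixed_norm (2 / s) f \<le>
        ennreal (C * (L2norm3 f * L2norm3 f2 + L2norm3 f1 * L2norm3 f12) powr ((1 - s) / 2)
                   * L2norm3 f powr ((2 * s - 1) / 2) * L2norm3 f3 powr (1 / 2))"
  proof (intro exI[of _ 1] conjI allI impI)
  fix f f1 f2 f3 f12 :: "real \<times> real \<times> real \<Rightarrow> real"
  assume h: "continuous_on UNIV f \<and> continuous_on UNIV f1 \<and> continuous_on UNIV f2 \<and>
    continuous_on UNIV f3 \<and> continuous_on UNIV f12 \<and>
    (\<forall>x1 x2 x3. ((\<lambda>t. f (t, x2, x3)) has_real_derivative f1 (x1, x2, x3)) (at x1)) \<and>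
    (\<forall>x1 x2 x3. ((\<lambda>t. f (x1, t, x3)) has_real_derivative f2 (x1, x2, x3)) (at x2)) \<and>
    (\<forall>x1 x2 x3. ((\<lambda>t. f (x1, x2, t)) has_real_derivative f3 (x1, x2, x3)) (at x3)) \<and>
    (\<forall>x1 x2 x3. ((\<lambda>t. f2 (t, x2, x3)) has_real_derivative f12 (x1, x2, x3)) (at x1)) \<and>
    integrable lborel (\<lambda>x. (f x)\<^sup>2) \<and> integrable lborel (\<lambda>x. (f1 x)\<^sup>2) \<and>
    integrable lborel (\<lambda>x. (f2 x)\<^sup>2) \<and> integrable lborel (\<lambda>x. (f3 x)\<^sup>2) \<and>
    integrable lborel (\<lambda>x. (f12 x)\<^sup>2)"
  show "mixed_norm (2 / s) f \<le>
        ennreal (1 * (L2norm3 f * L2norm3 f2 + L2norm3 f1 * L2norm3 f12) powr ((1 - s) / 2)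
                   * L2norm3 f powr ((2 * s - 1) / 2) * L2norm3 f3 powr (1 / 2))"
    by (rule main_bound[OF assms]) (use h in blast)+
qed simp

end
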